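(* Let $G$ be a compact vector space over $\mathbb{F}_2$, let $k\ge1$ with $\dim\widehat G\ge 2^{k-1}$, and put $\alpha=\sum_{m=0}^{k-1}2^{-2^m}$. Then: (i) for every subgroup $V\le\widehat G$ with $|V|\le 2^{2^{k-1}}-1$ one has $\{\alpha|V|\}(1-\{\alpha|V|\})\ge\tfrac18|V|^{-1}$; (ii) there is a measurable set $A\subset G$ of density $\alpha$ with $\|\chi_A\|_{A(G)}\le k$.
   Context: $G$ is a compact Hausdorff abelian group with $x+x=0$ for all $x$; $\widehat G$ its dual, a discrete $\mathbb{F}_2$-vector space; $\mu_G$ Haar probability measure; density of $A$ is $\mu_G(A)$; $\widehat f(\gamma)=\int_G f\overline\gamma\,d\mu_G$; $\|f\|_{A(G)}=\sum_{\gamma\in\widehat G}|\widehat f(\gamma)|$. $\{t\}$ is the fractional part of $t$. *)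

theory Defs
  imports "HOL-Analysis.Analysis"
begin

definition dual_group :: "('a::topological_ab_group_add \<Rightarrow> complex) set" where
  "dual_group = {\<gamma>. continuous_on UNIV \<gamma> \<and> (\<forall>x. cmod (\<gamma> x) = 1) \<and>
                      (\<forall>x y. \<gamma> (x + y) = \<gamma> x * \<gamma> y)}"

definition dual_subgroup :: "('a::topological_ab_group_add \<Rightarrow> complex) set \<Rightarrow> bool" where
  "dual_subgroup V \<longleftrightarrow> V \<subseteq> dual_group \<and> (\<lambda>x. 1) \<in> V \<and>
     (\<forall>a\<in>V. \<forall>b\<in>V. (\<lambda>x. a x * b x) \<in> V) \<and> (\<forall>a\<in>V. (\<lambda>x. cnj (a x)) \<in> V)"

text \<open>The dual of an F_2-vector space is an F_2-vector space (written multiplicatively);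
  dim \<ge> d means there are d linearly independent characters.\<close>
definition dual_dim_ge :: "'a::topological_ab_group_add itself \<Rightarrow> nat \<Rightarrow> bool" where
  "dual_dim_ge _ d \<longleftrightarrow> (\<exists>S. S \<subseteq> (dual_group :: ('a \<Rightarrow> complex) set) \<and> finite S \<and> card S = d \<and>
      (\<forall>T. T \<subseteq> S \<and> T \<noteq> {} \<longrightarrow> (\<lambda>x. \<Prod>\<gamma>\<in>T. \<gamma> x) \<noteq> (\<lambda>x. 1)))"

definition haar_prob :: "'a::topological_ab_group_add measure \<Rightarrow> bool" where
  "haar_prob M \<longleftrightarrow> emeasure M UNIV = 1 \<and> sets M = sets borel \<and>
     (\<forall>x A. A \<in> sets borel \<longrightarrow> emeasure M ((+) x ` A) = emeasure M A)"

definition fourier_coeff :: "'a::topological_ab_group_add measure \<Rightarrow> ('a \<Rightarrow> complex) \<Rightarrow> ('a \<Rightarrow> complex) \<Rightarrow> complex" where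
  "fourier_coeff M f \<gamma> = integral\<^sup>L M (\<lambda>x. f x * cnj (\<gamma> x))"

definition A_norm :: "'a::topological_ab_group_add measure \<Rightarrow> ('a \<Rightarrow> complex) \<Rightarrow> ennreal" where
  "A_norm M f = (\<Sum>\<^sub>\<infinity>\<gamma>\<in>dual_group. ennreal (cmod (fourier_coeff M f \<gamma>)))"

end

theory Submission
  imports Defs
begin


lemma char_0: assumes "\<gamma> \<in> dual_group" shows "\<gamma> 0 = 1"
proof -
  have hom: "\<forall>x y. \<gamma> (x+y) = \<gamma> x * \<gamma> y" and n: "cmod (\<gamma> 0) = 1" using assms by (auto simp: dual_group_def)
  have h: "\<gamma> 0 = \<gamma> 0 * \<gamma> 0" using hom by (metis add_0)
  have "\<gamma> 0 \<noteq> 0" using n by auto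
  moreover have "\<gamma> 0 * (\<gamma> 0 - 1) = 0" using h by (simp add: algebra_simps)
  ultimately show ?thesis by simp
qed

lemma char_sq: fixes \<gamma> :: "'a::topological_ab_group_add \<Rightarrow> complex" assumes "\<gamma> \<in> dual_group" "\<forall>x::'a::topological_ab_group_add. x + x = 0"
  shows "\<gamma> x * \<gamma> x = 1"
proof -
  have "\<gamma> (x+x) = \<gamma> x * \<gamma> x" using assms(1) by (auto simp: dual_group_def)
  then show ?thesis using assms(2) char_0[OF assms(1)] by (metis (no_types))
qed

lemma char_pm: fixes \<gamma> :: "'a::topological_ab_group_add \<Rightarrow> complex" assumes "\<gamma> \<in> dual_group" "\<forall>x::'a::topological_ab_group_add. x + x = 0"
  shows "\<gamma> x = 1 \<or> \<gamma> x = -1"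
  using char_sq[OF assms, of x] power2_eq_1_iff[of "\<gamma> x"] by (simp add: power2_eq_square)

lemma char_mult: assumes "\<gamma> \<in> dual_group" "\<delta> \<in> dual_group"
  shows "(\<lambda>x. \<gamma> x * \<delta> x) \<in> dual_group"
  using assms unfolding dual_group_def
  by (auto intro!: continuous_intros simp: norm_mult)

lemma char_cnj: assumes "\<gamma> \<in> dual_group"
  shows "(\<lambda>x. cnj (\<gamma> x)) \<in> dual_group"
  using assms unfolding dual_group_def
  by (auto intro!: continuous_intros)

lemma char_one: "(\<lambda>x. 1) \<in> dual_group"
  unfolding dual_group_def by auto

lemma char_prod: assumes "finite T" "\<And>j. j \<in> T \<Longrightarrow> g j \<in> dual_group"
  shows "(\<lambda>x. \<Prod>j\<in>T. g j x) \<in> dual_group"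
  using assms
proof (induction T rule: finite_induct)
  case empty then show ?case by (simp add: char_one)
next
  case (insert a F)
  then show ?case using char_mult[of "g a" "\<lambda>x. \<Prod>j\<in>F. g j x"] by simp
qed

lemma haar_space: assumes "haar_prob M" shows "space M = UNIV"
  using assms unfolding haar_prob_def by (metis sets_eq_imp_space_eq space_borel)

lemma haar_prob_space: assumes "haar_prob M" shows "finite_measure M"
  by (rule finite_measureI) (use assms haar_space[OF assms] in \<open>auto simp: haar_prob_def\<close>)

lemma haar_measure_UNIV: assumes "haar_prob M" shows "measure M (space M) = 1"
  using assms haar_space[OF assms] by (auto simp: haar_prob_def measure_def)

lemma char_meas: assumes "haar_prob M" "\<gamma> \<in> dual_group" shows "\<gamma> \<in> borel_measurable M"
proof -
  have "\<gamma> \<in> borel_measurable borel"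
    using assms(2) by (intro borel_measurable_continuous_onI) (auto simp: dual_group_def)
  then show ?thesis using assms(1) unfolding haar_prob_def
    by (metis measurable_cong_sets)
qed

lemma char_integrable: assumes "haar_prob M" "\<gamma> \<in> dual_group" shows "integrable M \<gamma>"
proof -
  interpret finite_measure M by (rule haar_prob_space[OF assms(1)])
  show ?thesis
    by (rule integrable_const_bound[where B=1]) (use assms char_meas in \<open>auto simp: dual_group_def\<close>)
qed

lemma haar_shift: fixes M :: "'a::topological_ab_group_add measure"
  assumes "haar_prob M" shows "distr M M (\<lambda>x. x + y) = M"
proof (rule measure_eqI)
  have sM: "sets M = sets borel" using assms by (simp add: haar_prob_def)
  have meas: "(\<lambda>x. x + y) \<in> measurable M M"
  proof -
    have "(\<lambda>x. x + y) \<in> borel_measurable borel"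
      by (intro borel_measurable_continuous_onI continuous_intros)
    then show ?thesis using sM by (metis measurable_cong_sets)
  qed
  show "sets (distr M M (\<lambda>x. x + y)) = sets M" by simp
  fix A assume A: "A \<in> sets (distr M M (\<lambda>x. x + y))"
  then have A': "A \<in> sets borel" using sM by simp
  have "(\<lambda>x. x + y) -` A \<inter> space M = (+) (-y) ` A"
    using haar_space[OF assms] by (force simp: image_iff algebra_simps)
  then have "emeasure (distr M M (\<lambda>x. x + y)) A = emeasure M ((+) (-y) ` A)"
    using A meas by (simp add: emeasure_distr)
  also have "\<dots> = emeasure M A" using assms A' unfolding haar_prob_def by blast
  finally show "emeasure (distr M M (\<lambda>x. x + y)) A = emeasure M A" .
qed

lemma integral_char: fixes M :: "'a::topological_ab_group_add measure"
  assumes "haar_prob M" "\<gamma> \<in> dual_group"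
  shows "integral\<^sup>L M \<gamma> = (if \<gamma> = (\<lambda>x. 1) then 1 else 0)"
proof (cases "\<gamma> = (\<lambda>x. 1)")
  case True
  interpret finite_measure M by (rule haar_prob_space[OF assms(1)])
  show ?thesis using True haar_measure_UNIV[OF assms(1)] by simp
next
  case False
  then obtain y where y: "\<gamma> y \<noteq> 1" by auto
  have sM: "sets M = sets borel" using assms by (simp add: haar_prob_def)
  have meas: "(\<lambda>x. x + y) \<in> measurable M M"
  proof -
    have "(\<lambda>x. x + y) \<in> borel_measurable borel"
      by (intro borel_measurable_continuous_onI continuous_intros)
    then show ?thesis using sM by (metis measurable_cong_sets)
  qed
  have "integral\<^sup>L M \<gamma> = integral\<^sup>L (distr M M (\<lambda>x. x + y)) \<gamma>"
    using haar_shift[OF assms(1)] by simp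
  also have "\<dots> = integral\<^sup>L M (\<lambda>x. \<gamma> (x + y))"
    by (rule integral_distr[OF meas char_meas[OF assms]])
  also have "\<dots> = integral\<^sup>L M (\<lambda>x. \<gamma> x * \<gamma> y)"
    using assms(2) by (simp add: dual_group_def)
  also have "\<dots> = integral\<^sup>L M \<gamma> * \<gamma> y" by simp
  finally have "integral\<^sup>L M \<gamma> * (1 - \<gamma> y) = 0" by (simp add: algebra_simps)
  then show ?thesis using y False by simp
qed



lemma char_conj_one: assumes "\<psi> \<in> dual_group" "\<eta> \<in> dual_group"
  shows "((\<lambda>x. \<psi> x * cnj (\<eta> x)) = (\<lambda>x. 1)) \<longleftrightarrow> \<psi> = \<eta>"
proof -
  have cc: "\<eta> x * cnj (\<eta> x) = 1" for x
  proof -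
    have "cmod (\<eta> x) = 1" using assms(2) by (simp add: dual_group_def)
    then show ?thesis by (metis complex_norm_square of_real_1 power_one)
  qed
  show ?thesis proof
  assume "(\<lambda>x. \<psi> x * cnj (\<eta> x)) = (\<lambda>x. 1)"
  then have "\<psi> x * cnj (\<eta> x) = 1" for x by metis
  then have "\<psi> x = \<eta> x" for x
    by (metis cc mult.assoc mult.commute mult.right_neutral)
  then show "\<psi> = \<eta>" by auto
next
  assume "\<psi> = \<eta>"
  then show "(\<lambda>x. \<psi> x * cnj (\<eta> x)) = (\<lambda>x. 1)"
    using cc by auto
qed
qed

lemma fourier_comb:
  fixes M :: "'a::topological_ab_group_add measure"
  assumes haar: "haar_prob M" and J: "finite J" and psi: "\<And>j. j\<in>J \<Longrightarrow> \<psi> j \<in> dual_group"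
    and chi: "\<eta> \<in> dual_group"
  shows "fourier_coeff M (\<lambda>x. \<Sum>j\<in>J. c j * \<psi> j x) \<eta> = (\<Sum>j\<in>{j\<in>J. \<psi> j = \<eta>}. c j)"
proof -
  have ch: "(\<lambda>x. \<psi> j x * cnj (\<eta> x)) \<in> dual_group" if "j \<in> J" for j
    using char_mult[OF psi[OF that] char_cnj[OF chi]] .
  have "fourier_coeff M (\<lambda>x. \<Sum>j\<in>J. c j * \<psi> j x) \<eta>
      = integral\<^sup>L M (\<lambda>x. \<Sum>j\<in>J. c j * (\<psi> j x * cnj (\<eta> x)))"
    unfolding fourier_coeff_def by (simp add: sum_distrib_right mult.assoc)
  also have "\<dots> = (\<Sum>j\<in>J. integral\<^sup>L M (\<lambda>x. c j * (\<psi> j x * cnj (\<eta> x))))"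
    by (rule Bochner_Integration.integral_sum[where f="\<lambda>j x. c j * (\<psi> j x * cnj (\<eta> x))"]) (use char_integrable[OF haar ch] in auto)
  also have "\<dots> = (\<Sum>j\<in>J. c j * (if \<psi> j = \<eta> then 1 else 0))"
    by (rule sum.cong) (auto simp: integral_char[OF haar ch] char_conj_one[OF psi chi])
  also have "\<dots> = (\<Sum>j\<in>{j\<in>J. \<psi> j = \<eta>}. c j)"
    using J by (simp add: sum.inter_filter if_distrib cong: if_cong)
  finally show ?thesis .
qed

lemma A_norm_comb:
  fixes M :: "'a::topological_ab_group_add measure"
  assumes haar: "haar_prob M" and J: "finite J" and psi: "\<And>j. j\<in>J \<Longrightarrow> \<psi> j \<in> dual_group"
  shows "A_norm M (\<lambda>x. \<Sum>j\<in>J. c j * \<psi> j x) \<le> ennreal (\<Sum>j\<in>J. cmod (c j))"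
proof -
  let ?f = "\<lambda>x. \<Sum>j\<in>J. c j * \<psi> j x"
  have sub: "\<psi> ` J \<subseteq> dual_group" using psi by auto
  have "A_norm M ?f = infsum (\<lambda>\<eta>. ennreal (cmod (\<Sum>j\<in>{j\<in>J. \<psi> j = \<eta>}. c j))) (\<psi> ` J)"
    unfolding A_norm_def
  proof (rule infsum_cong_neutral)
    fix \<eta> assume "\<eta> \<in> dual_group - \<psi> ` J"
    then have e: "{j\<in>J. \<psi> j = \<eta>} = {}" and "\<eta> \<in> dual_group" by auto
    then have "fourier_coeff M ?f \<eta> = 0"
      using fourier_comb[where \<psi>=\<psi> and \<eta>=\<eta> and c=c, OF haar J psi] by (simp only: e sum.empty)
    then show "ennreal (cmod (fourier_coeff M ?f \<eta>)) = 0" by simp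
  next
    fix \<eta> assume "\<eta> \<in> \<psi> ` J - dual_group" then show "ennreal (cmod (\<Sum>j\<in>{j\<in>J. \<psi> j = \<eta>}. c j)) = 0"
      using sub by auto
  next
    fix \<eta> assume "\<eta> \<in> dual_group \<inter> \<psi> ` J"
    then show "ennreal (cmod (fourier_coeff M ?f \<eta>)) = ennreal (cmod (\<Sum>j\<in>{j\<in>J. \<psi> j = \<eta>}. c j))"
      using fourier_comb[where \<psi>=\<psi> and \<eta>=\<eta> and c=c, OF haar J psi] by simp
  qed
  also have "\<dots> = (\<Sum>\<eta>\<in>\<psi> ` J. ennreal (cmod (\<Sum>j\<in>{j\<in>J. \<psi> j = \<eta>}. c j)))"
    using J by simp
  also have "\<dots> \<le> (\<Sum>\<eta>\<in>\<psi> ` J. ennreal (\<Sum>j\<in>{j\<in>J. \<psi> j = \<eta>}. cmod (c j)))"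
    by (intro sum_mono ennreal_leI norm_sum)
  also have "\<dots> = ennreal (\<Sum>\<eta>\<in>\<psi> ` J. (\<Sum>j\<in>{j\<in>J. \<psi> j = \<eta>}. cmod (c j)))"
    by (simp add: sum_nonneg)
  also have "(\<Sum>\<eta>\<in>\<psi> ` J. (\<Sum>j\<in>{j\<in>J. \<psi> j = \<eta>}. cmod (c j))) = (\<Sum>j\<in>J. cmod (c j))"
    using sum.image_gen[OF J, of "\<lambda>j. cmod (c j)" \<psi>] by simp
  finally show ?thesis .
qed



definition fmul :: "('a \<Rightarrow> complex) \<Rightarrow> ('a \<Rightarrow> complex) \<Rightarrow> ('a \<Rightarrow> complex)" where
  "fmul a b = (\<lambda>x. a x * b x)"

lemma elem2_card_aux:
  fixes V :: "('a \<Rightarrow> complex) set"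
  assumes fin: "finite V" and cl: "\<forall>a\<in>V. \<forall>b\<in>V. fmul a b \<in> V" and sq: "\<forall>a\<in>V. \<forall>x. a x * a x = 1"
  shows "W \<subseteq> V \<Longrightarrow> (\<forall>a\<in>W. \<forall>b\<in>W. fmul a b \<in> W) \<Longrightarrow> card W = 2^j \<Longrightarrow> \<exists>d. card V = 2^d"
proof (induction "card V - card W" arbitrary: W j rule: less_induct)
  case less
  show ?case
  proof (cases "W = V")
    case True then show ?thesis using less by auto
  next
    case False
    then obtain g where g: "g \<in> V" "g \<notin> W" using less by auto
    define W' where "W' = W \<union> fmul g ` W"
    have finW: "finite W" using less fin finite_subset by auto
    have gg: "fmul g (fmul g w) = w" for w
    proof -
      have "g x * (g x * w x) = w x" for x
        using sq g(1) by (metis mult.assoc mult_1)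
      then show ?thesis unfolding fmul_def by (intro ext) simp
    qed
    have sub: "W' \<subseteq> V" using less g cl unfolding W'_def by blast
    have cl': "\<forall>a\<in>W'. \<forall>b\<in>W'. fmul a b \<in> W'"
    proof (intro ballI)
      fix a b assume a: "a \<in> W'" and b: "b \<in> W'"
      have c1: "fmul a (fmul g w) = fmul g (fmul a w)" for a w by (auto simp: fmul_def)
      have c2: "fmul (fmul g w) b = fmul g (fmul w b)" for b w by (auto simp: fmul_def)
      have c3: "fmul (fmul g w1) (fmul g w2) = fmul w1 w2" for w1 w2
        using gg[of "fmul w1 w2"] by (auto simp: fmul_def algebra_simps)
      have Wcl: "\<forall>a\<in>W. \<forall>b\<in>W. fmul a b \<in> W" using less(3) .
      from a consider "a \<in> W" | w1 where "w1 \<in> W" "a = fmul g w1" unfolding W'_def by blast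
      then show "fmul a b \<in> W'"
      proof cases
        case 1
        from b consider "b \<in> W" | w2 where "w2 \<in> W" "b = fmul g w2" unfolding W'_def by blast
        then show ?thesis
        proof cases
          case 1 then show ?thesis using \<open>a \<in> W\<close> Wcl unfolding W'_def by blast
        next
          case 2
          have "fmul a w2 \<in> W" using Wcl \<open>a \<in> W\<close> 2 by blast
          then have "fmul g (fmul a w2) \<in> W'" unfolding W'_def by blast
          then show ?thesis by (simp only: 2 c1)
        qed
      next
        case 2
        note a2 = 2
        from b consider "b \<in> W" | w2 where "w2 \<in> W" "b = fmul g w2" unfolding W'_def by blast
        then show ?thesis
        proof cases
          case 1
          have "fmul w1 b \<in> W" using Wcl a2 1 by blast
          then have "fmul g (fmul w1 b) \<in> W'" unfolding W'_def by blast
          then show ?thesis by (simp only: a2 c2)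
        next
          case 2
          have "fmul w1 w2 \<in> W" using Wcl a2 2 by blast
          then have "fmul w1 w2 \<in> W'" unfolding W'_def by blast
          then show ?thesis by (simp only: a2 2 c3)
        qed
      qed
    qed
    have inj: "inj_on (fmul g) W" by (metis gg inj_onI)
    have disj: "W \<inter> fmul g ` W = {}"
    proof (rule ccontr)
      assume "W \<inter> fmul g ` W \<noteq> {}"
      then obtain w where w: "w \<in> W" "fmul g w \<in> W" by auto
      then have "fmul (fmul g w) w \<in> W" using less(3) by auto
      moreover have "fmul (fmul g w) w = g"
      proof -
        have "g x * w x * w x = g x" for x
          using sq less(2) w(1) by (metis mult.assoc mult_1_right subsetD)
        then show ?thesis unfolding fmul_def by (intro ext) simp
      qed
      ultimately show False using g by auto
    qed
    have cW': "card W' = 2^(Suc j)"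
      unfolding W'_def using card_Un_disjoint[OF finW _ disj] finW card_image[OF inj] less(4) by simp
    have "card W < card W'" using cW' less(4) by simp
    moreover have "card W' \<le> card V" using card_mono[OF fin sub] .
    ultimately have "card V - card W' < card V - card W" by simp
    then show ?thesis using less(1)[OF _ sub cl' cW'] by blast
  qed
qed

lemma elem2_card:
  fixes V :: "('a \<Rightarrow> complex) set"
  assumes "finite V" "(\<lambda>x. 1) \<in> V" "\<forall>a\<in>V. \<forall>b\<in>V. (\<lambda>x. a x * b x) \<in> V" "\<forall>a\<in>V. \<forall>x. a x * a x = 1"
  shows "\<exists>d. card V = 2^d"
  using elem2_card_aux[OF assms(1) _ assms(4), of "{\<lambda>x. 1}" 0] assms(2,3)
  by (auto simp: fmul_def)



lemma tail_bound:
  assumes "1 \<le> m0" "m0 \<le> k"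
  shows "(\<Sum>m\<in>{m0..<k}. (1/2::real) ^ (2^m)) \<le> (4/3) * (1/2) ^ (2^m0) - (4/3) * (1/2) ^ (2^k)"
  using assms(2)
proof (induction k rule: dec_induct)
  case base then show ?case by simp
next
  case (step k)
  define x where "x = (1/2::real) ^ (2^k)"
  have k1: "1 \<le> k" using assms(1) step by simp
  have "(2::nat) ^ 1 \<le> 2 ^ k" using k1 by (intro power_increasing) auto
  then have "(1/2::real) ^ (2^k) \<le> (1/2) ^ 2" by (intro power_decreasing) auto
  then have x4: "x \<le> 1/4" unfolding x_def by (simp add: power2_eq_square)
  have x0: "0 \<le> x" unfolding x_def by simp
  have sq: "(1/2::real) ^ (2 ^ Suc k) = x * x"
  proof -
    have "(1/2::real) ^ (2 ^ Suc k) = ((1/2)^(2^k))^2"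
      by (simp add: power_mult[symmetric] mult.commute)
    then show ?thesis unfolding x_def by (simp add: power2_eq_square)
  qed
  have "x * x \<le> x * (1/4)" using x4 x0 by (intro mult_left_mono) auto
  then show ?case using step(3) step(1) unfolding sq
    by (simp add: x_def[symmetric])
qed

lemma part_i_num:
  fixes d k :: nat assumes k1: "k \<ge> 1" and dk: "d < 2^(k-1)"
  defines "\<alpha> \<equiv> (\<Sum>m<k. (1/2::real) ^ (2 ^ m))"
  shows "frac (\<alpha> * 2^d) * (1 - frac (\<alpha> * 2^d)) \<ge> 1 / (8 * 2^d)"
proof -
  define m0 where "m0 = (LEAST m. d < 2^m)"
  have m0a: "d < 2^m0" unfolding m0_def by (rule LeastI[of _ "k-1"]) (rule dk)
  have m0k: "m0 \<le> k - 1" unfolding m0_def by (rule Least_le) (rule dk)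
  have m0b: "2^m \<le> d" if "m < m0" for m
    using not_less_Least[OF that[unfolded m0_def]] m0_def by simp
  define T where "T = (\<Sum>m\<in>{m0..<k}. (1/2::real) ^ (2^m))"
  define f where "f = 2^d * T"
  have pw: "(2::real)^d * (1/2) ^ (2^m) = real (2 ^ (d - 2^m))" if "2^m \<le> d" for m
  proof -
    have "(2::real)^d = 2^(d - 2^m) * 2^(2^m)" using that by (simp add: power_add[symmetric])
    then show ?thesis by (simp add: power_one_over)
  qed
  have split: "\<alpha> = (\<Sum>m\<in>{0..<m0}. (1/2::real) ^ (2^m)) + T"
    unfolding \<alpha>_def T_def using m0k k1
    by (simp add: atLeast0LessThan[symmetric] sum.atLeastLessThan_concat)
  have intpart: "2^d * (\<Sum>m\<in>{0..<m0}. (1/2::real) ^ (2^m)) = of_int (int (\<Sum>m\<in>{0..<m0}. 2 ^ (d - 2^m)))"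
    by (simp add: sum_distrib_left pw m0b)
  have ints: "(\<Sum>x = 0..<m0. (2::real) ^ (d - 2 ^ x)) \<in> \<int>"
  proof -
    have "(\<Sum>x = 0..<m0. (2::real) ^ (d - 2 ^ x)) = of_nat (\<Sum>x = 0..<m0. 2 ^ (d - 2 ^ x))" by simp
    then show ?thesis by (metis Ints_of_nat)
  qed
  have fr: "frac (\<alpha> * 2^d) = frac f"
    unfolding split f_def using ints by (simp add: algebra_simps intpart[simplified] frac_add_int_right)
  have T0: "(1/2::real)^(2^m0) \<le> T"
    unfolding T_def using m0k k1 by (intro member_le_sum) auto
  show ?thesis
  proof (cases "m0 = 0")
    case True
    then have d0: "d = 0" using m0a by simp
    have Te: "T = 1/2 + (\<Sum>m\<in>{1..<k}. (1/2::real) ^ (2^m))"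
      unfolding T_def True using k1 by (simp add: sum.atLeast_Suc_lessThan)
    have tb: "(\<Sum>m\<in>{1..<k}. (1/2::real) ^ (2^m)) \<le> (4/3) * (1/2) ^ (2^1) - (4/3) * (1/2) ^ (2^k)"
      by (rule tail_bound) (use k1 in auto)
    have nz: "0 \<le> (1/2::real) ^ (2^k)" by simp
    have "(\<Sum>m\<in>{1..<k}. (1/2::real) ^ (2^m)) \<le> 1/3"
    proof -
      have "(4/3) * (1/2::real)^(2^1) = 1/3" by (simp add: power2_eq_square)
      then show ?thesis using tb nz by linarith
    qed
    moreover have "0 \<le> (\<Sum>m\<in>{1..<k}. (1/2::real) ^ (2^m))" by (intro sum_nonneg) auto
    ultimately have fb: "1/2 \<le> f" "f \<le> 5/6" unfolding f_def d0 using Te by auto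
    then have "frac f = f" by (simp add: frac_eq)
    moreover have "0 \<le> (f - 1/6) * (5/6 - f)" using fb by (intro mult_nonneg_nonneg) auto
    moreover have "(f - 1/6) * (5/6 - f) = f*(1-f) - 5/36" by (simp add: field_simps)
    ultimately have "1/8 \<le> f * (1 - f)" by linarith
    then show ?thesis using fr d0 \<open>frac f = f\<close> by simp
  next
    case False
    define e where "e = (2::real)^d * (1/2)^(2^m0)"
    have "T \<le> (4/3) * (1/2) ^ (2^m0) - (4/3) * (1/2) ^ (2^k)"
      unfolding T_def by (rule tail_bound) (use False m0k k1 in auto)
    moreover have "0 \<le> (1/2::real) ^ (2^k)" by simp
    ultimately have Tu: "T \<le> (4/3) * (1/2) ^ (2^m0)" by linarith
    have fe: "e \<le> f" "f \<le> (4/3) * e" unfolding e_def f_def using T0 Tu by auto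
    have "d + 1 \<le> 2^m0" using m0a by simp
    then have "(1/2::real)^(2^m0) \<le> (1/2)^(d+1)" by (intro power_decreasing) auto
    then have "e \<le> 2^d * (1/2)^(d+1)" unfolding e_def by (intro mult_left_mono) auto
    also have "\<dots> = 1/2" by (simp add: power_one_over)
    finally have e2: "e \<le> 1/2" .
    have "2^(m0-1) \<le> d" using m0b[of "m0-1"] False by simp
    then have "2^m0 \<le> 2*d" using False by (metis Suc_diff_1 mult.commute not_gr0 power_Suc2 mult_le_mono1)
    then have "(1/2::real)^(2*d) \<le> (1/2)^(2^m0)" by (intro power_decreasing) auto
    then have "2^d * (1/2::real)^(2*d) \<le> e" unfolding e_def by (intro mult_left_mono) auto
    moreover have "2^d * (1/2::real)^(2*d) = (1/2)^d"
      by (simp add: power_mult power_one_over power2_eq_square mult_2 power_add)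
    ultimately have e3: "(1/2)^d \<le> e" by simp
    have f0: "0 \<le> f" "f < 1" using fe e2 e3 by (auto intro: order_trans[OF zero_le_power])
    then have "frac f = f" by (simp add: frac_eq)
    moreover have "f * (1/3) \<le> f * (1 - f)" using f0 fe e2 by (intro mult_left_mono) auto
    moreover have "1 / (8 * 2^d) \<le> f * (1/3)"
    proof -
      have "1 / (8 * 2^d) = (1/2::real)^d / 8" by (simp add: power_one_over)
      also have "\<dots> \<le> e / 3" using e3 zero_le_power[of "1/2::real" d] by linarith
      also have "\<dots> \<le> f * (1/3)" using fe by simp
      finally show ?thesis .
    qed
    ultimately show ?thesis using fr by simp
  qed
qed


lemma part_ii:
  fixes M :: "'a::topological_ab_group_add measure"
  assumes haar: "haar_prob M" and exp2: "\<forall>x::'a. x + x = 0" and k1: "k \<ge> 1"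
    and dim: "dual_dim_ge TYPE('a) (2 ^ (k - 1))"
  shows "\<exists>A. A \<in> sets M \<and> measure M A = (\<Sum>m<k. (1/2::real) ^ (2 ^ m)) \<and>
            A_norm M (indicator A) \<le> of_nat k"
proof -
  define n where "n = (2::nat) ^ (k - 1)"
  obtain S where S: "S \<subseteq> (dual_group :: ('a \<Rightarrow> complex) set)" "finite S" "card S = n"
    and indep: "\<forall>T. T \<subseteq> S \<and> T \<noteq> {} \<longrightarrow> (\<lambda>x. \<Prod>\<gamma>\<in>T. \<gamma> x) \<noteq> (\<lambda>x. 1)"
    using dim unfolding dual_dim_ge_def n_def by blast
  obtain g where g: "bij_betw g {0..<n} S" using ex_bij_betw_nat_finite[OF S(2)] S(3) by auto
  have gS: "g j \<in> S" if "j < n" for j using g that by (auto simp: bij_betw_def)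
  have gd: "g j \<in> dual_group" if "j < n" for j using gS[OF that] S(1) by auto
  have ginj: "inj_on g {0..<n}" using g by (auto simp: bij_betw_def)
  have mn: "2^m \<le> n" if "m < k" for m
    unfolding n_def using that by (intro power_increasing) auto
  have gpm: "g j x = 1 \<or> g j x = -1" if "j < n" for j x using char_pm[OF gd[OF that] exp2] .
  define \<sigma> where "\<sigma> m j = (if j = m then -1 else (1::complex))" for m j :: nat
  define B where "B m = {x. \<forall>j<2^m. g j x = \<sigma> m j}" for m :: nat
  define A where "A = (\<Union>m\<in>{..<k}. B m)"
  define J where "J = (SIGMA m:{..<k}. Pow {..<(2::nat)^m})"
  define c where "c = (\<lambda>(m::nat, T::nat set). (1/2::complex)^(2^m) * (\<Prod>j\<in>T. \<sigma> m j))"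
  define \<psi> where "\<psi> = (\<lambda>(m::nat, T::nat set). (\<lambda>x. \<Prod>j\<in>T. g j x))"
  have finJ: "finite J" unfolding J_def by auto
  have psid: "\<psi> p \<in> dual_group" if pJ: "p \<in> J" for p
  proof -
    obtain m T where p: "p = (m, T)" "m < k" "T \<subseteq> {..<2^m}" using pJ unfolding J_def by (cases p) auto
    have "finite T" using p finite_subset by blast
    moreover have "g j \<in> dual_group" if "j \<in> T" for j using gd p mn that by fastforce
    ultimately show ?thesis unfolding p \<psi>_def by (simp add: char_prod)
  qed
  have psi1: "\<psi> (m, T) = (\<lambda>x. 1) \<longleftrightarrow> T = {}" if "(m, T) \<in> J" for m T
  proof
    assume h: "\<psi> (m, T) = (\<lambda>x. 1)"
    show "T = {}"
    proof (rule ccontr)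
      assume ne: "T \<noteq> {}"
      have Tn: "T \<subseteq> {0..<n}" using that mn unfolding J_def by fastforce
      have injT: "inj_on g T" using inj_on_subset[OF ginj Tn] .
      have "(\<lambda>x. \<Prod>\<gamma>\<in>g ` T. \<gamma> x) = (\<lambda>x. \<Prod>j\<in>T. g j x)"
        using prod.reindex[OF injT] by (auto simp: comp_def)
      also have "\<dots> = (\<lambda>x. 1)" using h unfolding \<psi>_def by simp
      finally have "(\<lambda>x. \<Prod>\<gamma>\<in>g ` T. \<gamma> x) = (\<lambda>x. 1)" .
      moreover have "g ` T \<subseteq> S" "g ` T \<noteq> {}" using Tn gS ne by auto
      ultimately show False using indep by blast
    qed
  next
    assume "T = {}" then show "\<psi> (m, T) = (\<lambda>x. 1)" unfolding \<psi>_def by simp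
  qed
  have disj: "m = m'" if "x \<in> B m" "x \<in> B m'" "m < k" "m' < k" for x m m'
  proof (rule ccontr)
    assume "m \<noteq> m'"
    then consider "m < m'" | "m' < m" by linarith
    then show False
    proof cases
      case 1
      have "m < 2^m" "m < 2^m'" using 1 less_exp[of m] less_exp[of m'] by (auto intro: less_trans)
      then have "g m x = -1" "g m x = 1" using that 1 unfolding B_def \<sigma>_def by auto
      then show False by simp
    next
      case 2
      have "m' < 2^m'" "m' < 2^m" using 2 less_exp[of m] less_exp[of m'] by (auto intro: less_trans)
      then have "g m' x = -1" "g m' x = 1" using that 2 unfolding B_def \<sigma>_def by auto
      then show False by simp
    qed
  qed
  have indA: "(indicator A x :: complex) = (\<Sum>m<k. indicator (B m) x)" for x
  proof (cases "x \<in> A")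
    case True
    then obtain m0 where m0: "m0 < k" "x \<in> B m0" unfolding A_def by auto
    have "(\<Sum>m<k. (indicator (B m) x :: complex)) = (\<Sum>m<k. if m = m0 then 1 else 0)"
      by (rule sum.cong) (use disj m0 in \<open>auto simp: indicator_def\<close>)
    also have "\<dots> = 1" using m0 by simp
    finally show ?thesis using True by simp
  next
    case False
    then show ?thesis unfolding A_def by (simp add: indicator_def)
  qed
  have indB: "(indicator (B m) x :: complex) = (\<Sum>T\<in>Pow {..<2^m}. c (m, T) * \<psi> (m, T) x)"
    if mk: "m < k" for m x
  proof -
    have fac: "1 + \<sigma> m j * g j x = (if g j x = \<sigma> m j then 2 else 0)" if "j < 2^m" for j
    proof -
      have "j < n" using that mn[OF mk] by simp
      then show ?thesis using gpm[of j x] unfolding \<sigma>_def by auto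
    qed
    have "(indicator (B m) x :: complex) = (1/2)^(2^m) * (\<Prod>j<2^m. 1 + \<sigma> m j * g j x)"
    proof (cases "x \<in> B m")
      case True
      then have "(\<Prod>j<2^m. 1 + \<sigma> m j * g j x) = (\<Prod>j<(2::nat)^m. (2::complex))"
        by (intro prod.cong) (auto simp: fac B_def \<sigma>_def)
      then show ?thesis using True by (simp add: power_one_over)
    next
      case False
      then obtain j where j: "j < 2^m" "g j x \<noteq> \<sigma> m j" unfolding B_def by auto
      then have "(\<Prod>j<2^m. 1 + \<sigma> m j * g j x) = 0"
        by (intro prod_zero) (auto simp: fac intro!: bexI[of _ j])
      then show ?thesis using False by simp
    qed
    also have "(\<Prod>j<2^m. 1 + \<sigma> m j * g j x) = (\<Sum>T\<in>Pow {..<2^m}. (\<Prod>j\<in>T. \<sigma> m j * g j x))"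
      using prod_add[of "{..<(2::nat)^m}" "\<lambda>j. \<sigma> m j * g j x" "\<lambda>j. 1"] by (simp add: add.commute)
    also have "(1/2)^(2^m) * \<dots> = (\<Sum>T\<in>Pow {..<2^m}. c (m, T) * \<psi> (m, T) x)"
      unfolding c_def \<psi>_def by (simp add: sum_distrib_left prod.distrib mult.assoc)
    finally show ?thesis .
  qed
  have indJ: "(\<lambda>x. indicator A x :: complex) = (\<lambda>x. \<Sum>p\<in>J. c p * \<psi> p x)"
  proof
    fix x
    have "(indicator A x :: complex) = (\<Sum>m<k. \<Sum>T\<in>Pow {..<2^m}. c (m, T) * \<psi> (m, T) x)"
      unfolding indA by (rule sum.cong) (auto simp: indB)
    also have "\<dots> = (\<Sum>p\<in>J. c p * \<psi> p x)"
      unfolding J_def by (subst sum.Sigma) (auto simp: case_prod_beta)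
    finally show "(indicator A x :: complex) = (\<Sum>p\<in>J. c p * \<psi> p x)" .
  qed
  have sM: "sets M = sets borel" using haar by (simp add: haar_prob_def)
  have closedB: "closed (B m)" if mk: "m < k" for m
  proof -
    have "B m = (\<Inter>j\<in>{..<2^m}. {x. g j x = \<sigma> m j})" unfolding B_def by auto
    moreover have "closed {x. g j x = \<sigma> m j}" if "j < 2^m" for j
    proof -
      have "continuous_on UNIV (g j)" using gd[of j] that mn[OF mk] by (auto simp: dual_group_def)
      then show ?thesis by (intro closed_Collect_eq continuous_intros) auto
    qed
    ultimately show ?thesis by auto
  qed
  have Ameas: "A \<in> sets M"
  proof -
    have "closed A" unfolding A_def using closedB by auto
    then show ?thesis using sM by (simp add: borel_closed)
  qed
  have csum: "(\<Sum>p\<in>J. cmod (c p)) = real k"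
  proof -
    have "(\<Sum>p\<in>J. cmod (c p)) = (\<Sum>m<k. \<Sum>T\<in>Pow {..<(2::nat)^m}. cmod (c (m, T)))"
      unfolding J_def by (subst sum.Sigma) (auto simp: case_prod_beta)
    also have "\<dots> = (\<Sum>m<k. \<Sum>T\<in>Pow {..<(2::nat)^m}. (1/2::real)^(2^m))"
    proof (intro sum.cong refl)
      fix m T
      have "cmod (\<Prod>j\<in>T. \<sigma> m j) = (\<Prod>j\<in>T. cmod (\<sigma> m j))" by (simp add: prod_norm)
      also have "\<dots> = 1" by (intro prod.neutral) (auto simp: \<sigma>_def)
      finally show "cmod (c (m, T)) = (1/2::real)^(2^m)"
        unfolding c_def by (simp add: norm_mult norm_power)
    qed
    also have "\<dots> = (\<Sum>m<k. 1)"
      by (intro sum.cong refl) (simp add: card_Pow power_one_over)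
    finally show ?thesis by simp
  qed
  have normA: "A_norm M (indicator A) \<le> of_nat k"
  proof -
    have "A_norm M (indicator A) = A_norm M (\<lambda>x. \<Sum>p\<in>J. c p * \<psi> p x)"
      using indJ by (metis)
    also have "\<dots> \<le> ennreal (\<Sum>p\<in>J. cmod (c p))"
      by (rule A_norm_comb[OF haar finJ psid])
    finally show ?thesis using csum by (simp add: ennreal_of_nat_eq_real_of_nat)
  qed
  have measA: "measure M A = (\<Sum>m<k. (1/2::real) ^ (2 ^ m))"
  proof -
    have spM: "space M = UNIV" using haar_space[OF haar] .
    have "complex_of_real (measure M A) = integral\<^sup>L M (\<lambda>x. complex_of_real (indicator A x))"
      using spM by simp
    also have "(\<lambda>x. complex_of_real (indicator A x)) = (\<lambda>x. (\<Sum>p\<in>J. c p * \<psi> p x) * cnj 1)"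
    proof
      fix x
      have "(\<Sum>p\<in>J. c p * \<psi> p x) = indicator A x" using fun_cong[OF indJ, of x] by simp
      then show "complex_of_real (indicator A x) = (\<Sum>p\<in>J. c p * \<psi> p x) * cnj 1"
        by (simp add: indicator_def)
    qed
    also have "integral\<^sup>L M \<dots> = fourier_coeff M (\<lambda>x. \<Sum>p\<in>J. c p * \<psi> p x) (\<lambda>x. 1)"
      unfolding fourier_coeff_def by simp
    also have "\<dots> = (\<Sum>p\<in>{p\<in>J. \<psi> p = (\<lambda>x. 1)}. c p)"
      by (rule fourier_comb[OF haar finJ psid char_one])
    also have "{p\<in>J. \<psi> p = (\<lambda>x. 1)} = (\<lambda>m. (m, {}::nat set)) ` {..<k}"
    proof (intro set_eqI iffI)
      fix p assume "p \<in> {p\<in>J. \<psi> p = (\<lambda>x. 1)}"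
      then obtain m T where "p = (m, T)" "(m, T) \<in> J" "\<psi> (m, T) = (\<lambda>x. 1)" by (cases p) auto
      then show "p \<in> (\<lambda>m. (m, {}::nat set)) ` {..<k}" using psi1 unfolding J_def by auto
    next
      fix p assume "p \<in> (\<lambda>m. (m, {}::nat set)) ` {..<k}"
      then obtain m where "p = (m, {}::nat set)" "m < k" by auto
      moreover then have "(m, {}) \<in> J" unfolding J_def by auto
      ultimately show "p \<in> {p\<in>J. \<psi> p = (\<lambda>x. 1)}" using psi1 by auto
    qed
    also have "(\<Sum>p\<in>(\<lambda>m. (m, {}::nat set)) ` {..<k}. c p) = (\<Sum>m<k. c (m, {}))"
      by (subst sum.reindex) (auto simp: inj_on_def)
    also have "\<dots> = complex_of_real (\<Sum>m<k. (1/2::real) ^ (2 ^ m))"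
      unfolding c_def by simp
    finally show ?thesis using of_real_eq_iff by blast
  qed
  show ?thesis using Ameas measA normA by blast
qed

theorem mainTheorem15:
  fixes M :: "'a::{topological_ab_group_add, t2_space} measure" and k :: nat
  assumes compactG: "compact (UNIV :: 'a set)"
    and exp2: "\<forall>x::'a. x + x = 0"
    and haar: "haar_prob M"
    and k1: "k \<ge> 1"
    and dim: "dual_dim_ge TYPE('a) (2 ^ (k - 1))"
  shows "(\<forall>V :: ('a \<Rightarrow> complex) set. dual_subgroup V \<and> finite V \<and> card V \<le> 2 ^ (2 ^ (k - 1)) - 1 \<longrightarrow>
            frac ((\<Sum>m<k. (1/2::real) ^ (2 ^ m)) * real (card V)) *
              (1 - frac ((\<Sum>m<k. (1/2::real) ^ (2 ^ m)) * real (card V)))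
            \<ge> 1 / (8 * real (card V)))
      \<and> (\<exists>A. A \<in> sets M \<and> measure M A = (\<Sum>m<k. (1/2::real) ^ (2 ^ m)) \<and>
            A_norm M (indicator A) \<le> of_nat k)"
proof (intro conjI allI impI)
  fix V :: "('a \<Rightarrow> complex) set"
  assume h: "dual_subgroup V \<and> finite V \<and> card V \<le> 2 ^ (2 ^ (k - 1)) - 1"
  have sq: "\<forall>a\<in>V. \<forall>x. a x * a x = 1"
    using h char_sq[OF _ exp2] unfolding dual_subgroup_def by blast
  obtain d where d: "card V = 2^d"
    using elem2_card[of V] h sq unfolding dual_subgroup_def by blast
  have pos: "(0::nat) < 2^(2^(k-1))" by simp
  have "(2::nat)^d < 2^(2^(k-1))" using h d pos by linarith
  then have dk: "d < 2^(k-1)" by (simp add: power_less_imp_less_exp)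
  show "frac ((\<Sum>m<k. (1/2::real) ^ (2 ^ m)) * real (card V)) *
              (1 - frac ((\<Sum>m<k. (1/2::real) ^ (2 ^ m)) * real (card V)))
            \<ge> 1 / (8 * real (card V))"
    using part_i_num[OF k1 dk] d by simp
next
  show "\<exists>A. A \<in> sets M \<and> measure M A = (\<Sum>m<k. (1/2::real) ^ (2 ^ m)) \<and>
            A_norm M (indicator A) \<le> of_nat k"
    by (rule part_ii[OF haar exp2 k1 dim])
qed

end
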